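(* Let $h\in R$ and let $x$ be the binary representation of $h$, and suppose $x\ne 1001000$. Then every occurrence of $1000$ as a contiguous substring of $x$ starts at the first position of $x$ (i.e. $1000$ can occur in $x$ only as a prefix).
   Context: Stern's sequence $(a(n))_{n\ge0}$: $a(0)=0$, $a(1)=1$, $a(2n)=a(n)$, $a(2n+1)=a(n)+a(n+1)$; $s(n)=a(n+1)$ for $n\ge0$. $R$ is the set of record-setters of $s$, i.e. indices $v\ge0$ with $s(i)<s(v)$ for all $i<v$. The binary representation of a positive integer has no leading zeros; $0$ is represented by the string $0$. *)

theory Defs
  imports Main
begin

function stern :: "nat \<Rightarrow> nat" where
  "stern n = (if n = 0 then 0 else if n = 1 then 1
              else if even n then stern (n div 2)
              else stern (n div 2) + stern (n div 2 + 1))"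
  by pat_completeness auto
termination
  by (relation "measure id") (auto elim!: oddE)

definition s :: "nat \<Rightarrow> nat" where
  "s n = stern (n + 1)"

definition R :: "nat set" where
  "R = {v. \<forall>i<v. s i < s v}"

fun bin_pos :: "nat \<Rightarrow> nat list" where
  "bin_pos n = (if n = 0 then [] else bin_pos (n div 2) @ [n mod 2])"

definition bin :: "nat \<Rightarrow> nat list" where
  "bin n = (if n = 0 then [0] else bin_pos n)"

end

theory Submission
  imports Defs
begin

type_synonym mat = "nat \<times> nat \<times> nat \<times> nat"

fun mm :: "mat \<Rightarrow> mat \<Rightarrow> mat" where
  "mm (a,b,c,d) (e,f,g,k) = (a*e+b*g, a*f+b*k, c*e+d*g, c*f+d*k)"

definition Imat :: mat where "Imat = (1,0,0,1)"
definition Mb :: "nat \<Rightarrow> mat" where "Mb x = (if x = 0 then (1,1,0,1) else (1,0,1,1))"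
definition Mx :: "nat list \<Rightarrow> mat" where "Mx l = foldl (\<lambda>A x. mm A (Mb x)) Imat l"
fun dd :: "mat \<Rightarrow> nat" where "dd (a,b,c,d) = d"
fun rowv :: "nat \<times> nat \<Rightarrow> mat \<Rightarrow> nat \<times> nat" where
  "rowv (x,y) (a,b,c,d) = (x*a+y*c, x*b+y*d)"
definition val :: "nat list \<Rightarrow> nat" where "val l = foldl (\<lambda>a b. 2*a+b) 0 l"
definition bits :: "nat list \<Rightarrow> bool" where "bits l = (\<forall>x\<in>set l. x \<le> 1)"

declare stern.simps[simp del] bin_pos.simps[simp del]

lemma mm_assoc: "mm (mm A B) C = mm A (mm B C)"
  by (cases A; cases B; cases C) (simp add: algebra_simps)
lemma mm_I1[simp]: "mm Imat A = A" by (cases A) (simp add: Imat_def)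
lemma mm_I2[simp]: "mm A Imat = A" by (cases A) (simp add: Imat_def)

lemma Mx_Nil[simp]: "Mx [] = Imat" by (simp add: Mx_def)
lemma Mx_snoc: "Mx (l @ [x]) = mm (Mx l) (Mb x)" by (simp add: Mx_def)
lemma Mx_append: "Mx (l1 @ l2) = mm (Mx l1) (Mx l2)"
proof (induction l2 rule: rev_induct)
  case Nil then show ?case by simp
next
  case (snoc x xs) then show ?case
    by (metis Mx_snoc append_assoc mm_assoc)
qed
lemma Mx_Cons: "Mx (x # l) = mm (Mb x) (Mx l)"
  using Mx_append[of "[x]" l] by (simp add: Mx_def)

lemma val_snoc: "val (l @ [x]) = 2 * val l + x" by (simp add: val_def)
lemma val_Nil[simp]: "val [] = 0" by (simp add: val_def)
lemma val_append: "val (xs @ ys) = val xs * 2 ^ length ys + val ys"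
proof (induction ys rule: rev_induct)
  case Nil then show ?case by simp
next
  case (snoc x ys) then show ?case
    by (simp add: val_snoc flip: append_assoc)
qed

lemma bits_append[simp]: "bits (xs @ ys) = (bits xs \<and> bits ys)"
  by (auto simp: bits_def)
lemma bits_Cons[simp]: "bits (x # ys) = (x \<le> 1 \<and> bits ys)"
  by (auto simp: bits_def)
lemma bits_Nil[simp]: "bits []" by (simp add: bits_def)

lemma val_lt: "bits l \<Longrightarrow> val l < 2 ^ length l"
proof (induction l rule: rev_induct)
  case Nil then show ?case by simp
next
  case (snoc x xs) then show ?case by (simp add: val_snoc)
qed

lemma stern0: "stern 0 = 0" using stern.simps[of 0] by simp
lemma stern1: "stern 1 = 1" using stern.simps[of 1] by simp
lemma stern1'[simp]: "stern (Suc 0) = Suc 0" using stern1 by simp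
lemma bin_pos1[simp]: "bin_pos (Suc 0) = [1]" by (simp add: bin_pos.simps[of "Suc 0"] bin_pos.simps[of 0])
lemma stern_even: "stern (2*n) = stern n"
proof (cases "n = 0")
  case True then show ?thesis by (simp add: stern0)
next
  case False
  have "stern (2*n) = (if 2*n = 0 then 0 else if 2*n = 1 then 1
              else if even (2*n) then stern (2*n div 2)
              else stern (2*n div 2) + stern (2*n div 2 + 1))" by (rule stern.simps)
  with False show ?thesis by simp
qed
lemma stern_odd: "stern (2*n+1) = stern n + stern (n+1)"
proof (cases "n = 0")
  case True then show ?thesis by (simp add: stern0 stern1)
next
  case False
  have "stern (2*n+1) = (if 2*n+1 = 0 then 0 else if 2*n+1 = 1 then 1
              else if even (2*n+1) then stern ((2*n+1) div 2)
              else stern ((2*n+1) div 2) + stern ((2*n+1) div 2 + 1))" by (rule stern.simps)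
  with False show ?thesis by simp
qed
lemma stern_even2: "stern (2*n+2) = stern (n+1)"
  using stern_even[of "n+1"] by (simp add: algebra_simps)

lemma stern_odd': "stern (Suc (2*n)) = stern n + stern (Suc n)" using stern_odd[of n] by simp
lemma stern_even2': "stern (Suc (Suc (2*n))) = stern (Suc n)" using stern_even2[of n] by simp

lemma rowv_mm: "rowv v (mm A B) = rowv (rowv v A) B"
  by (cases v; cases A; cases B) (simp add: algebra_simps)

lemma stern_ML: "bits l \<Longrightarrow> (stern (val l), stern (val l + 1)) = rowv (0,1) (Mx l)"
proof (induction l rule: rev_induct)
  case Nil then show ?case by (simp add: Imat_def stern0 stern1)
next
  case (snoc x xs)
  then have IH: "(stern (val xs), stern (val xs + 1)) = rowv (0,1) (Mx xs)" and x: "x \<le> 1" by auto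
  have "rowv (0,1) (Mx (xs@[x])) = rowv (stern (val xs), stern (val xs + 1)) (Mb x)"
    by (simp only: Mx_snoc rowv_mm IH)
  also have "\<dots> = (stern (val (xs@[x])), stern (val (xs@[x]) + 1))"
  proof (cases "x = 0")
    case True then show ?thesis by (simp add: Mb_def val_snoc stern_even stern_odd')
  next
    case False then have "x = 1" using x by simp
    then show ?thesis by (simp add: Mb_def val_snoc stern_odd' stern_even2')
  qed
  finally show ?case by simp
qed

lemma s_ML: "bits l \<Longrightarrow> s (val l) = dd (Mx l)"
proof -
  assume b: "bits l"
  obtain a b' c d where M: "Mx l = (a,b',c,d)" by (cases "Mx l") auto
  from stern_ML[OF b] M show ?thesis by (simp add: s_def)
qed

lemma bin_pos_props: "n > 0 \<Longrightarrow> bits (bin_pos n) \<and> val (bin_pos n) = n \<and> 2 ^ length (bin_pos n) \<le> 2 * n"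
proof (induction n rule: bin_pos.induct)
  case (1 n)
  show ?case
  proof (cases "n div 2 = 0")
    case True
    then have "n = 1" using 1(2) by simp
    then show ?thesis by (simp add: bin_pos.simps[of 1] bin_pos.simps[of 0] val_def)
  next
    case False
    then have IH: "bits (bin_pos (n div 2)) \<and> val (bin_pos (n div 2)) = n div 2 \<and> 2 ^ length (bin_pos (n div 2)) \<le> 2 * (n div 2)"
      using 1 by auto
    have e: "bin_pos n = bin_pos (n div 2) @ [n mod 2]" using 1(2) by (simp add: bin_pos.simps[of n])
    show ?thesis using IH unfolding e by (auto simp: val_snoc)
  qed
qed

lemma bin_props: "h > 0 \<Longrightarrow> bits (bin h) \<and> val (bin h) = h \<and> 2 ^ length (bin h) \<le> 2 * h"
  using bin_pos_props by (simp add: bin_def)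

lemma mono4:
  assumes "p1 \<le> g1" "p2 \<le> g2" "p3 \<le> g3" "p4 \<le> g4"
  shows "dd (mm (mm A (p1,p2,p3,p4)) C) \<le> dd (mm (mm A (g1,g2,g3,g4)) C)"
proof -
  obtain a1 a2 a3 a4 where A: "A = (a1,a2,a3,a4)" by (cases A) auto
  obtain c1 c2 c3 c4 where C: "C = (c1,c2,c3,c4)" by (cases C) auto
  show ?thesis unfolding A C using assms
    by (simp add: algebra_simps add_mono mult_le_mono)
qed

lemma monoL:
  assumes "p3 \<le> g3" "p4 \<le> g4"
  shows "dd (mm (mm Imat (p1,p2,p3,p4)) C) \<le> dd (mm (mm Imat (g1,g2,g3,g4)) C)"
proof -
  obtain c1 c2 c3 c4 where C: "C = (c1,c2,c3,c4)" by (cases C) auto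
  show ?thesis unfolding C using assms
    by (simp add: add_mono mult_le_mono)
qed

lemma monoR:
  assumes "p2 \<le> g2" "p4 \<le> g4"
  shows "dd (mm (mm A (p1,p2,p3,p4)) Imat) \<le> dd (mm (mm A (g1,g2,g3,g4)) Imat)"
proof -
  obtain a1 a2 a3 a4 where A: "A = (a1,a2,a3,a4)" by (cases A) auto
  show ?thesis unfolding A using assms
    by (simp add: add_mono mult_le_mono)
qed

lemma monoLR:
  assumes "p4 \<le> g4"
  shows "dd (mm (mm Imat (p1,p2,p3,p4)) Imat) \<le> dd (mm (mm Imat (g1,g2,g3,g4)) Imat)"
  using assms by simp

lemma rule_gen:
  assumes hR: "h \<in> R" and eq: "bin h = A @ P @ C" and bG: "bits G" and one: "1 \<in> set P"
    and len: "length G < length P \<or> (length G = length P \<and> val G < val P)"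
    and mono: "dd (mm (mm (Mx A) (Mx P)) (Mx C)) \<le> dd (mm (mm (Mx A) (Mx G)) (Mx C))"
  shows False
proof -
  have h0: "h > 0"
  proof (rule ccontr)
    assume "\<not> h > 0" then have "h = 0" by simp
    then have "bin h = [0]" by (simp add: bin_def)
    with eq one show False
      by (metis Un_iff empty_iff empty_set insert_iff list.set(2) set_append zero_neq_one)
  qed
  from bin_props[OF h0] have bx: "bits (bin h)" and vx: "val (bin h) = h"
    and lx: "2 ^ length (bin h) \<le> 2 * h" by auto
  from bx eq have bA: "bits A" and bP: "bits P" and bC: "bits C" by auto
  define y where "y = A @ G @ C"
  have by': "bits y" using bA bG bC by (simp add: y_def)
  have yl: "val y < h"
    using len
  proof
    assume "length G < length P"
    then have "length y < length (bin h)" by (simp add: y_def eq)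
    then have "2 * 2 ^ length y \<le> (2::nat) ^ length (bin h)"
      by (metis Suc_leI power_Suc power_increasing_iff one_less_numeral_iff semiring_norm(76))
    with val_lt[OF by'] lx show ?thesis by linarith
  next
    assume a: "length G = length P \<and> val G < val P"
    have "val (G @ C) < val (P @ C)" using a by (simp add: val_append)
    moreover have "val y = val A * 2 ^ length (G @ C) + val (G @ C)"
      by (simp add: y_def val_append[of A])
    moreover have "val (bin h) = val A * 2 ^ length (P @ C) + val (P @ C)"
      by (simp add: eq val_append[of A])
    ultimately have "val y < val (bin h)" using a by simp
    with vx show ?thesis by simp
  qed
  have "s h \<le> s (val y)"
  proof -
    have "s h = dd (Mx (bin h))" using s_ML[OF bx] vx by simp
    also have "\<dots> = dd (mm (mm (Mx A) (Mx P)) (Mx C))" by (simp add: eq Mx_append mm_assoc)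
    also have "\<dots> \<le> dd (mm (mm (Mx A) (Mx G)) (Mx C))" by (rule mono)
    also have "\<dots> = s (val y)" using s_ML[OF by'] by (simp add: y_def Mx_append mm_assoc)
    finally show ?thesis .
  qed
  moreover have "s (val y) < s h" using hR yl by (simp add: R_def)
  ultimately show False by simp
qed

lemma mxP1: "Mx [0,0,0,0,1,0,0,0] = (5,19,1,4)" by (simp add: Mx_def Mb_def Imat_def)
lemma mxG1: "Mx [0,0,1,0,0,1,0] = (11,19,4,7)" by (simp add: Mx_def Mb_def Imat_def)
lemma rule1: assumes "h \<in> R" "bin h = A @ [0,0,0,0,1,0,0,0] @ []" shows False
proof (rule rule_gen[OF assms(1) assms(2), of "[0,0,1,0,0,1,0]"])
  show "dd (mm (mm (Mx A) (Mx [0,0,0,0,1,0,0,0])) (Mx [])) \<le> dd (mm (mm (Mx A) (Mx [0,0,1,0,0,1,0])) (Mx []))"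
    unfolding mxP1 mxG1 Mx_Nil by (rule monoR) simp_all
qed (simp_all add: val_def)

lemma mxP2: "Mx [1,0,0,0,1,0,0,0] = (4,15,5,19)" by (simp add: Mx_def Mb_def Imat_def)
lemma mxG2: "Mx [0,1,0,1,0,0,1,0] = (18,31,11,19)" by (simp add: Mx_def Mb_def Imat_def)
lemma rule2: assumes "h \<in> R" "bin h = A @ [1,0,0,0,1,0,0,0] @ []" shows False
proof (rule rule_gen[OF assms(1) assms(2), of "[0,1,0,1,0,0,1,0]"])
  show "dd (mm (mm (Mx A) (Mx [1,0,0,0,1,0,0,0])) (Mx [])) \<le> dd (mm (mm (Mx A) (Mx [0,1,0,1,0,0,1,0])) (Mx []))"
    unfolding mxP2 mxG2 Mx_Nil by (rule monoR) simp_all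
qed (simp_all add: val_def)

lemma mxP3: "Mx [0,0,0,1,0,0,0,0] = (4,19,1,5)" by (simp add: Mx_def Mb_def Imat_def)
lemma mxG3: "Mx [0,0,0,0,1,0,1,0] = (14,23,3,5)" by (simp add: Mx_def Mb_def Imat_def)
lemma rule3: assumes "h \<in> R" "bin h = A @ [0,0,0,1,0,0,0,0] @ C" shows False
proof (rule rule_gen[OF assms(1) assms(2), of "[0,0,0,0,1,0,1,0]"])
  show "dd (mm (mm (Mx A) (Mx [0,0,0,1,0,0,0,0])) (Mx C)) \<le> dd (mm (mm (Mx A) (Mx [0,0,0,0,1,0,1,0])) (Mx C))"
    unfolding mxP3 mxG3 Mx_Nil by (rule mono4) simp_all
qed (simp_all add: val_def)

lemma mxP4: "Mx [0,0,0,1,0,0,0,1] = (19,15,5,4)" by (simp add: Mx_def Mb_def Imat_def)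
lemma mxG4: "Mx [0,0,0,0,1,0,0,0] = (5,19,1,4)" by (simp add: Mx_def Mb_def Imat_def)
lemma rule4: assumes "h \<in> R" "bin h = A @ [0,0,0,1,0,0,0,1] @ []" shows False
proof (rule rule_gen[OF assms(1) assms(2), of "[0,0,0,0,1,0,0,0]"])
  show "dd (mm (mm (Mx A) (Mx [0,0,0,1,0,0,0,1])) (Mx [])) \<le> dd (mm (mm (Mx A) (Mx [0,0,0,0,1,0,0,0])) (Mx []))"
    unfolding mxP4 mxG4 Mx_Nil by (rule monoR) simp_all
qed (simp_all add: val_def)

lemma mxP5: "Mx [0,0,0,1,0,0,0,1,0] = (19,34,5,9)" by (simp add: Mx_def Mb_def Imat_def)
lemma mxG5: "Mx [0,0,1,0,1,0,1,0] = (21,34,8,13)" by (simp add: Mx_def Mb_def Imat_def)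
lemma rule5: assumes "h \<in> R" "bin h = A @ [0,0,0,1,0,0,0,1,0] @ C" shows False
proof (rule rule_gen[OF assms(1) assms(2), of "[0,0,1,0,1,0,1,0]"])
  show "dd (mm (mm (Mx A) (Mx [0,0,0,1,0,0,0,1,0])) (Mx C)) \<le> dd (mm (mm (Mx A) (Mx [0,0,1,0,1,0,1,0])) (Mx C))"
    unfolding mxP5 mxG5 Mx_Nil by (rule mono4) simp_all
qed (simp_all add: val_def)

lemma mxP6: "Mx [0,0,0,1,0,0,0,1,1] = (34,15,9,4)" by (simp add: Mx_def Mb_def Imat_def)
lemma mxG6: "Mx [0,1,0,1,0,1,0,1] = (34,21,21,13)" by (simp add: Mx_def Mb_def Imat_def)
lemma rule6: assumes "h \<in> R" "bin h = A @ [0,0,0,1,0,0,0,1,1] @ C" shows False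
proof (rule rule_gen[OF assms(1) assms(2), of "[0,1,0,1,0,1,0,1]"])
  show "dd (mm (mm (Mx A) (Mx [0,0,0,1,0,0,0,1,1])) (Mx C)) \<le> dd (mm (mm (Mx A) (Mx [0,1,0,1,0,1,0,1])) (Mx C))"
    unfolding mxP6 mxG6 Mx_Nil by (rule mono4) simp_all
qed (simp_all add: val_def)

lemma mxP7: "Mx [1,0,0,1,0,0,0,0] = (3,14,4,19)" by (simp add: Mx_def Mb_def Imat_def)
lemma mxG7: "Mx [0,1,0,1,0,0,1,0] = (18,31,11,19)" by (simp add: Mx_def Mb_def Imat_def)
lemma rule7: assumes "h \<in> R" "bin h = [] @ [1,0,0,1,0,0,0,0] @ C" shows False
proof (rule rule_gen[OF assms(1) assms(2), of "[0,1,0,1,0,0,1,0]"])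
  show "dd (mm (mm (Mx []) (Mx [1,0,0,1,0,0,0,0])) (Mx C)) \<le> dd (mm (mm (Mx []) (Mx [0,1,0,1,0,0,1,0])) (Mx C))"
    unfolding mxP7 mxG7 Mx_Nil by (rule monoL) simp_all
qed (simp_all add: val_def)

lemma mxP8: "Mx [1,0,0,1,0,0,0,1] = (14,11,19,15)" by (simp add: Mx_def Mb_def Imat_def)
lemma mxG8: "Mx [0,1,0,0,1,0,0,0] = (7,26,4,15)" by (simp add: Mx_def Mb_def Imat_def)
lemma rule8: assumes "h \<in> R" "bin h = [] @ [1,0,0,1,0,0,0,1] @ []" shows False
proof (rule rule_gen[OF assms(1) assms(2), of "[0,1,0,0,1,0,0,0]"])
  show "dd (mm (mm (Mx []) (Mx [1,0,0,1,0,0,0,1])) (Mx [])) \<le> dd (mm (mm (Mx []) (Mx [0,1,0,0,1,0,0,0])) (Mx []))"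
    unfolding mxP8 mxG8 Mx_Nil by (rule monoLR) simp_all
qed (simp_all add: val_def)

lemma mxP9: "Mx [1,0,0,1,0,0,0,1,0] = (14,25,19,34)" by (simp add: Mx_def Mb_def Imat_def)
lemma mxG9: "Mx [0,1,0,1,0,1,0,1,0] = (34,55,21,34)" by (simp add: Mx_def Mb_def Imat_def)
lemma rule9: assumes "h \<in> R" "bin h = [] @ [1,0,0,1,0,0,0,1,0] @ C" shows False
proof (rule rule_gen[OF assms(1) assms(2), of "[0,1,0,1,0,1,0,1,0]"])
  show "dd (mm (mm (Mx []) (Mx [1,0,0,1,0,0,0,1,0])) (Mx C)) \<le> dd (mm (mm (Mx []) (Mx [0,1,0,1,0,1,0,1,0])) (Mx C))"
    unfolding mxP9 mxG9 Mx_Nil by (rule monoL) simp_all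
qed (simp_all add: val_def)

lemma mxP10: "Mx [1,0,0,1,0,0,0,1,1] = (25,11,34,15)" by (simp add: Mx_def Mb_def Imat_def)
lemma mxG10: "Mx [0,1,1,0,1,0,1,0,1] = (47,29,34,21)" by (simp add: Mx_def Mb_def Imat_def)
lemma rule10: assumes "h \<in> R" "bin h = [] @ [1,0,0,1,0,0,0,1,1] @ C" shows False
proof (rule rule_gen[OF assms(1) assms(2), of "[0,1,1,0,1,0,1,0,1]"])
  show "dd (mm (mm (Mx []) (Mx [1,0,0,1,0,0,0,1,1])) (Mx C)) \<le> dd (mm (mm (Mx []) (Mx [0,1,1,0,1,0,1,0,1])) (Mx C))"
    unfolding mxP10 mxG10 Mx_Nil by (rule monoL) simp_all
qed (simp_all add: val_def)

lemma mxP11: "Mx [0,0,0,0,1,0,0,1,0,0,0] = (19,71,4,15)" by (simp add: Mx_def Mb_def Imat_def)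
lemma mxG11: "Mx [0,0,0,1,0,1,0,1,0,0] = (29,76,8,21)" by (simp add: Mx_def Mb_def Imat_def)
lemma rule11: assumes "h \<in> R" "bin h = A @ [0,0,0,0,1,0,0,1,0,0,0] @ C" shows False
proof (rule rule_gen[OF assms(1) assms(2), of "[0,0,0,1,0,1,0,1,0,0]"])
  show "dd (mm (mm (Mx A) (Mx [0,0,0,0,1,0,0,1,0,0,0])) (Mx C)) \<le> dd (mm (mm (Mx A) (Mx [0,0,0,1,0,1,0,1,0,0])) (Mx C))"
    unfolding mxP11 mxG11 Mx_Nil by (rule mono4) simp_all
qed (simp_all add: val_def)

lemma mxP12: "Mx [1,0,0,0,1,0,0,1,0,0,0] = (15,56,19,71)" by (simp add: Mx_def Mb_def Imat_def)
lemma mxG12: "Mx [0,1,0,0,1,0,1,0,1,0,0] = (50,131,29,76)" by (simp add: Mx_def Mb_def Imat_def)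
lemma rule12: assumes "h \<in> R" "bin h = A @ [1,0,0,0,1,0,0,1,0,0,0] @ C" shows False
proof (rule rule_gen[OF assms(1) assms(2), of "[0,1,0,0,1,0,1,0,1,0,0]"])
  show "dd (mm (mm (Mx A) (Mx [1,0,0,0,1,0,0,1,0,0,0])) (Mx C)) \<le> dd (mm (mm (Mx A) (Mx [0,1,0,0,1,0,1,0,1,0,0])) (Mx C))"
    unfolding mxP12 mxG12 Mx_Nil by (rule mono4) simp_all
qed (simp_all add: val_def)

lemma mxP13: "Mx [1,0,0,1,0,0,1,0,0,0] = (11,41,15,56)" by (simp add: Mx_def Mb_def Imat_def)
lemma mxG13: "Mx [1,0,0,0,1,0,1,0,1,0] = (29,47,37,60)" by (simp add: Mx_def Mb_def Imat_def)
lemma rule13: assumes "h \<in> R" "bin h = A @ [1,0,0,1,0,0,1,0,0,0] @ C" shows False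
proof (rule rule_gen[OF assms(1) assms(2), of "[1,0,0,0,1,0,1,0,1,0]"])
  show "dd (mm (mm (Mx A) (Mx [1,0,0,1,0,0,1,0,0,0])) (Mx C)) \<le> dd (mm (mm (Mx A) (Mx [1,0,0,0,1,0,1,0,1,0])) (Mx C))"
    unfolding mxP13 mxG13 Mx_Nil by (rule mono4) simp_all
qed (simp_all add: val_def)

lemma mxP14: "Mx [1,0,1,0,0,1,0,0,0] = (7,26,11,41)" by (simp add: Mx_def Mb_def Imat_def)
lemma mxG14: "Mx [1,0,0,1,0,0,1,0,0] = (11,30,15,41)" by (simp add: Mx_def Mb_def Imat_def)
lemma rule14: assumes "h \<in> R" "bin h = A @ [1,0,1,0,0,1,0,0,0] @ C" shows False
proof (rule rule_gen[OF assms(1) assms(2), of "[1,0,0,1,0,0,1,0,0]"])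
  show "dd (mm (mm (Mx A) (Mx [1,0,1,0,0,1,0,0,0])) (Mx C)) \<le> dd (mm (mm (Mx A) (Mx [1,0,0,1,0,0,1,0,0])) (Mx C))"
    unfolding mxP14 mxG14 Mx_Nil by (rule mono4) simp_all
qed (simp_all add: val_def)

lemma mxP15: "Mx [1,1,0,0,1,0,0,0] = (3,11,7,26)" by (simp add: Mx_def Mb_def Imat_def)
lemma mxG15: "Mx [1,0,0,1,0,0,1,0] = (11,19,15,26)" by (simp add: Mx_def Mb_def Imat_def)
lemma rule15: assumes "h \<in> R" "bin h = A @ [1,1,0,0,1,0,0,0] @ C" shows False
proof (rule rule_gen[OF assms(1) assms(2), of "[1,0,0,1,0,0,1,0]"])
  show "dd (mm (mm (Mx A) (Mx [1,1,0,0,1,0,0,0])) (Mx C)) \<le> dd (mm (mm (Mx A) (Mx [1,0,0,1,0,0,1,0])) (Mx C))"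
    unfolding mxP15 mxG15 Mx_Nil by (rule mono4) simp_all
qed (simp_all add: val_def)

lemma mxP16: "Mx [1,0,1,0,0,0] = (2,7,3,11)" by (simp add: Mx_def Mb_def Imat_def)
lemma mxG16: "Mx [1,0,0,1,0,0] = (3,8,4,11)" by (simp add: Mx_def Mb_def Imat_def)
lemma rule16: assumes "h \<in> R" "bin h = A @ [1,0,1,0,0,0] @ C" shows False
proof (rule rule_gen[OF assms(1) assms(2), of "[1,0,0,1,0,0]"])
  show "dd (mm (mm (Mx A) (Mx [1,0,1,0,0,0])) (Mx C)) \<le> dd (mm (mm (Mx A) (Mx [1,0,0,1,0,0])) (Mx C))"
    unfolding mxP16 mxG16 Mx_Nil by (rule mono4) simp_all
qed (simp_all add: val_def)

lemma mxP17: "Mx [1,1,0,0,0] = (1,3,2,7)" by (simp add: Mx_def Mb_def Imat_def)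
lemma mxG17: "Mx [1,0,0,1,0] = (3,5,4,7)" by (simp add: Mx_def Mb_def Imat_def)
lemma rule17: assumes "h \<in> R" "bin h = A @ [1,1,0,0,0] @ C" shows False
proof (rule rule_gen[OF assms(1) assms(2), of "[1,0,0,1,0]"])
  show "dd (mm (mm (Mx A) (Mx [1,1,0,0,0])) (Mx C)) \<le> dd (mm (mm (Mx A) (Mx [1,0,0,1,0])) (Mx C))"
    unfolding mxP17 mxG17 Mx_Nil by (rule mono4) simp_all
qed (simp_all add: val_def)

lemma snoc_cases:
  assumes "bits u"
  obtains "u = []" | v where "u = v @ [0]" "bits v" | v where "u = v @ [1]" "bits v"
proof (cases u rule: rev_exhaust)
  case Nil then show ?thesis using that by simp
next
  case (snoc v x)
  then have "x = 0 \<or> x = 1" "bits v" using assms by auto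
  then show ?thesis using that snoc by auto
qed

lemma cons_cases:
  assumes "bits w"
  obtains "w = []" | v where "w = 0 # v" "bits v" | v where "w = 1 # v" "bits v"
proof (cases w)
  case Nil then show ?thesis using that by simp
next
  case (Cons x v)
  then have "x = 0 \<or> x = 1" "bits v" using assms by auto
  then show ?thesis using that Cons by auto
qed

lemma bin_pos_hd: "n > 0 \<Longrightarrow> \<exists>t. bin_pos n = 1 # t"
proof (induction n rule: bin_pos.induct)
  case (1 n)
  show ?case
  proof (cases "n div 2 = 0")
    case True
    then have "n = 1" using 1(2) by simp
    then show ?thesis by simp
  next
    case False
    then obtain t where "bin_pos (n div 2) = 1 # t" using 1 by auto
    moreover have "bin_pos n = bin_pos (n div 2) @ [n mod 2]" using 1(2) by (simp add: bin_pos.simps[of n])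
    ultimately show ?thesis by simp
  qed
qed

lemma main_aux:
  assumes hR: "h \<in> R" and eq: "bin h = u @ [1,0,0,0] @ w" and bu: "bits u" and bw: "bits w"
    and hu: "\<exists>t. u = 1 # t" and ne: "\<not> (u = [1,0,0] \<and> w = [])"
  shows False
proof (cases rule: snoc_cases[OF bu])
  case 1 then show ?thesis using hu by simp
next
  case (3 v) then show ?thesis using rule17[OF hR, of v w] eq by simp
next
  case (2 v) note u1 = 2
  show ?thesis
  proof (cases rule: snoc_cases[OF u1(2)])
    case 1 then show ?thesis using hu u1 by simp
  next
    case (3 v2) then show ?thesis using rule16[OF hR, of v2 w] eq u1 by simp
  next
    case (2 v2) note u2 = 2
    show ?thesis
    proof (cases rule: snoc_cases[OF u2(2)])
      case 1 then show ?thesis using hu u1 u2 by simp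
    next
      case (2 v3) note u3 = 2
      show ?thesis
      proof (cases rule: cons_cases[OF bw])
        case 1 note w1 = 1
        show ?thesis
        proof (cases rule: snoc_cases[OF u3(2)])
          case 1 then show ?thesis using hu u1 u2 u3 by simp
        next
          case (2 v4) then show ?thesis using rule1[OF hR, of v4] eq u1 u2 u3 w1 by simp
        next
          case (3 v4) then show ?thesis using rule2[OF hR, of v4] eq u1 u2 u3 w1 by simp
        qed
      next
        case (2 w') then show ?thesis using rule3[OF hR, of v3 w'] eq u1 u2 u3 by simp
      next
        case (3 w') note w1 = 3
        show ?thesis
        proof (cases rule: cons_cases[OF w1(2)])
          case 1 then show ?thesis using rule4[OF hR, of v3] eq u1 u2 u3 w1 by simp
        next
          case (2 w'') then show ?thesis using rule5[OF hR, of v3 w''] eq u1 u2 u3 w1 by simp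
        next
          case (3 w'') then show ?thesis using rule6[OF hR, of v3 w''] eq u1 u2 u3 w1 by simp
        qed
      qed
    next
      case (3 v3) note u3 = 3
      show ?thesis
      proof (cases rule: snoc_cases[OF u3(2)])
        case 1 note uu = 1
        show ?thesis
        proof (cases rule: cons_cases[OF bw])
          case 1 then show ?thesis using ne u1 u2 u3 uu by simp
        next
          case (2 w') then show ?thesis using rule7[OF hR, of w'] eq u1 u2 u3 uu by simp
        next
          case (3 w') note w1 = 3
          show ?thesis
          proof (cases rule: cons_cases[OF w1(2)])
            case 1 then show ?thesis using rule8[OF hR] eq u1 u2 u3 uu w1 by simp
          next
            case (2 w'') then show ?thesis using rule9[OF hR, of w''] eq u1 u2 u3 uu w1 by simp
          next
            case (3 w'') then show ?thesis using rule10[OF hR, of w''] eq u1 u2 u3 uu w1 by simp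
          qed
        qed
      next
        case (3 v4) then show ?thesis using rule15[OF hR, of v4 w] eq u1 u2 u3 by simp
      next
        case (2 v4) note u4 = 2
        show ?thesis
        proof (cases rule: snoc_cases[OF u4(2)])
          case 1 then show ?thesis using hu u1 u2 u3 u4 by simp
        next
          case (3 v5) then show ?thesis using rule14[OF hR, of v5 w] eq u1 u2 u3 u4 by simp
        next
          case (2 v5) note u5 = 2
          show ?thesis
          proof (cases rule: snoc_cases[OF u5(2)])
            case 1 then show ?thesis using hu u1 u2 u3 u4 u5 by simp
          next
            case (3 v6) then show ?thesis using rule13[OF hR, of v6 w] eq u1 u2 u3 u4 u5 by simp
          next
            case (2 v6) note u6 = 2
            show ?thesis
            proof (cases rule: snoc_cases[OF u6(2)])
              case 1 then show ?thesis using hu u1 u2 u3 u4 u5 u6 by simp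
            next
              case (2 v7) then show ?thesis using rule11[OF hR, of v7 w] eq u1 u2 u3 u4 u5 u6 by simp
            next
              case (3 v7) then show ?thesis using rule12[OF hR, of v7 w] eq u1 u2 u3 u4 u5 u6 by simp
            qed
          qed
        qed
      qed
    qed
  qed
qed

theorem mainTheorem8:
  fixes h :: nat
  assumes "h \<in> R"
    and "bin h \<noteq> [1,0,0,1,0,0,0]"
  shows "\<forall>u w. bin h = u @ [1,0,0,0] @ w \<longrightarrow> u = []"
proof (intro allI impI)
  fix u w assume eq: "bin h = u @ [1,0,0,0] @ w"
  show "u = []"
  proof (rule ccontr)
    assume un: "u \<noteq> []"
    have h0: "h > 0"
    proof (rule ccontr)
      assume "\<not> h > 0" then have "bin h = [0]" by (simp add: bin_def)
      with eq show False by (cases u) auto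
    qed
    from bin_props[OF h0] have bx: "bits (bin h)" by simp
    from bin_pos_hd[OF h0] h0 obtain t where "bin h = 1 # t" by (auto simp: bin_def)
    with eq un have hu: "\<exists>t. u = 1 # t" by (cases u) auto
    from bx eq have bu: "bits u" and bw: "bits w" by auto
    have ne: "\<not> (u = [1,0,0] \<and> w = [])" using assms(2) eq by auto
    show False by (rule main_aux[OF assms(1) eq bu bw hu ne])
  qed
qed

end
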